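(* Let $n\ge 2$ and $m\ge 2$ be integers. Let $M_1=(\mu_{ij})$ be the $n\times n$ $0/1$ matrix with $\mu_{1,n-1}=\mu_{1,n}=1$, $\mu_{i,i-1}=1$ for $2\le i\le n$, and all other entries $0$, and let $\mathbb{A}_0$ be the order $m$, dimension $n$ tensor with $(\mathbb{A}_0)_{ij\ldots j}=\mu_{ij}$ for all $i,j\in[n]$ and $(\mathbb{A}_0)_{ii_2\ldots i_m}=0$ whenever $i_2,\ldots,i_m$ are not all equal. Then: (i) if $k$ is an integer with $1\le k\le n^2-3n+2$ and $k=(n-1)q+r$ with $q\ge0$, $1\le r\le n-1$, then $S_k(\mathbb{A}_0,n-1)=\{r-q-1,\ldots,r-1,r\}\pmod n$ and $|S_k(\mathbb{A}_0,n-1)|=q+2$; (ii) for every positive integer $t$ and every $j\in\{1,\ldots,n-2\}$, $S_{t+(n-1-j)}(\mathbb{A}_0,j)=S_t(\mathbb{A}_0,n-1)$, and also $S_{t+n-1}(\mathbb{A}_0,n)=S_t(\mathbb{A}_0,n-1)$.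
   Context: For an integer $a$, $|a|_n$ denotes the least positive integer congruent to $a$ modulo $n$, and $\{a_1,\ldots,a_s\}\pmod n$ means $\{|a_1|_n,\ldots,|a_s|_n\}$. General product of tensors of dimension $n$: for $\mathbb{A}$ of order $m\ge2$ and $\mathbb{B}$ of order $k\ge1$, $(\mathbb{A}\mathbb{B})_{i\alpha_1\ldots\alpha_{m-1}}=\sum_{i_2,\ldots,i_m=1}^n a_{ii_2\ldots i_m}b_{i_2\alpha_1}\cdots b_{i_m\alpha_{m-1}}$ ($\alpha_l\in[n]^{k-1}$), a tensor of order $(m-1)(k-1)+1$; it is associative and $\mathbb{A}^k$ is the $k$-fold power. The majorization matrix of a tensor $\mathbb{C}$ is $(M(\mathbb{C}))_{ij}=c_{ij\ldots j}$. For a nonnegative tensor $\mathbb{A}$, $j\in[n]$ and $k\ge1$, $S_k(\mathbb{A},j)=\{u\in[n]\mid (M(\mathbb{A}^k))_{uj}>0\}$. *)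

theory Defs
  imports Complex_Main
begin

text \<open>A tensor of dimension n is represented as a real-valued function on index lists;
  the order of the tensor is the length of the index lists at which it is meaningful.
  Indices range over [n] = {1..n}.\<close>

type_synonym tensor = "nat list \<Rightarrow> real"

text \<open>General product of an order-m tensor A and an order-k tensor B (dimension n):
  (A B)_{i alpha_1 ... alpha_{m-1}} = sum_{i_2..i_m} a_{i i_2 .. i_m} b_{i_2 alpha_1} ... b_{i_m alpha_{m-1}},
  where each alpha_l is a block of k-1 indices.\<close>

definition tprod :: "nat \<Rightarrow> nat \<Rightarrow> nat \<Rightarrow> tensor \<Rightarrow> tensor \<Rightarrow> tensor" where
  "tprod n m k A B idx =
     (case idx of [] \<Rightarrow> 0
      | i # rest \<Rightarrow>
          (\<Sum>is\<in>{xs. length xs = m - 1 \<and> set xs \<subseteq> {1..n}}.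
              A (i # is) *
              (\<Prod>l<m - 1. B ((is ! l) # take (k - 1) (drop (l * (k - 1)) rest)))))"

fun tpow :: "nat \<Rightarrow> nat \<Rightarrow> tensor \<Rightarrow> nat \<Rightarrow> tensor" where
  "tpow n m A 0 = A"
| "tpow n m A (Suc 0) = A"
| "tpow n m A (Suc (Suc k)) = tprod n m ((m - 1) ^ Suc k + 1) A (tpow n m A (Suc k))"

definition major :: "nat \<Rightarrow> tensor \<Rightarrow> nat \<Rightarrow> nat \<Rightarrow> real" where
  "major ord C i j = C (i # replicate (ord - 1) j)"

definition Sset :: "nat \<Rightarrow> nat \<Rightarrow> tensor \<Rightarrow> nat \<Rightarrow> nat \<Rightarrow> nat set" where
  "Sset n m A k j = {u \<in> {1..n}. major ((m - 1) ^ k + 1) (tpow n m A k) u j > 0}"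

definition mu :: "nat \<Rightarrow> nat \<Rightarrow> nat \<Rightarrow> real" where
  "mu n i j = (if (i = 1 \<and> (j = n - 1 \<or> j = n)) \<or> (2 \<le> i \<and> i \<le> n \<and> j = i - 1) then 1 else 0)"

definition A0 :: "nat \<Rightarrow> nat \<Rightarrow> tensor" where
  "A0 n m idx =
     (case idx of [] \<Rightarrow> 0
      | i # is \<Rightarrow> (if length is = m - 1 \<and> is \<noteq> [] \<and> (\<forall>x\<in>set is. x = hd is)
                   then mu n i (hd is) else 0))"

definition lpres :: "nat \<Rightarrow> int \<Rightarrow> int" where
  "lpres n a = (a - 1) mod int n + 1"

end

theory Submission imports Defs begin

lemma A0_nonneg: "A0 n m idx \<ge> 0"
  by (auto simp: A0_def mu_def split: list.splits)

lemma tpow_nonneg: "tpow n m (A0 n m) k idx \<ge> 0"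
proof (induction n m "A0 n m" k arbitrary: idx rule: tpow.induct)
  case (3 n m k)
  then show ?case
    by (auto simp: tprod_def A0_nonneg split: list.splits intro!: sum_nonneg mult_nonneg_nonneg prod_nonneg)
qed (auto simp: A0_nonneg)

lemma major_one:
  assumes "m \<ge> 2"
  shows "major ((m-1)^Suc 0 + 1) (tpow n m (A0 n m) (Suc 0)) u j = mu n u j"
  using assms by (simp add: major_def A0_def)

lemma sum_reduce:
  assumes "m \<ge> 2"
  shows "(\<Sum>is\<in>{xs. length xs = m - 1 \<and> set xs \<subseteq> {1..n}}. A0 n m (u # is) * P is)
       = (\<Sum>l\<in>{1..n}. mu n u l * P (replicate (m-1) l))"
proof -
  let ?L = "{xs. length xs = m - 1 \<and> set xs \<subseteq> {1..n}}"
  let ?h = "\<lambda>l. replicate (m-1) l"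
  have fin: "finite ?L"
  proof -
    have "?L = {xs. set xs \<subseteq> {1..n} \<and> length xs = m-1}" by blast
    then show ?thesis using finite_lists_length_eq[of "{1..n}" "m-1"] by simp
  qed
  have sub: "?h ` {1..n} \<subseteq> ?L" by auto
  have zero: "\<forall>xs\<in>?L - ?h ` {1..n}. A0 n m (u # xs) * P xs = 0"
  proof
    fix xs assume xs: "xs \<in> ?L - ?h ` {1..n}"
    show "A0 n m (u # xs) * P xs = 0"
    proof (cases "xs \<noteq> [] \<and> (\<forall>x\<in>set xs. x = hd xs)")
      case True
      have "replicate (length xs) (hd xs) = xs" by (rule replicate_length_same) (use True in auto)
      moreover have "set xs \<subseteq> {1..n}" using xs by simp
      then have "hd xs \<in> {1..n}" using True hd_in_set by blast
      ultimately have "xs \<in> ?h ` {1..n}" using xs by (metis (mono_tags, lifting) Diff_iff image_eqI mem_Collect_eq)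
      then show ?thesis using xs by simp
    next
      case False then show ?thesis by (auto simp: A0_def)
    qed
  qed
  have "(\<Sum>is\<in>?L. A0 n m (u # is) * P is) = (\<Sum>is\<in>?h ` {1..n}. A0 n m (u # is) * P is)"
    by (rule sum.mono_neutral_right[OF fin sub zero])
  also have "\<dots> = (\<Sum>l\<in>{1..n}. A0 n m (u # ?h l) * P (?h l))"
    by (rule sum.reindex_cong[where l = ?h]) (use assms in \<open>auto simp: inj_on_def\<close>)
  also have "\<dots> = (\<Sum>l\<in>{1..n}. mu n u l * P (replicate (m-1) l))"
    using assms by (simp add: A0_def)
  finally show ?thesis .
qed

lemma major_step:
  assumes m2: "m \<ge> 2"
  shows "major ((m-1)^Suc (Suc k) + 1) (tpow n m (A0 n m) (Suc (Suc k))) u j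
       = (\<Sum>l\<in>{1..n}. mu n u l * (major ((m-1)^Suc k + 1) (tpow n m (A0 n m) (Suc k)) l j)^(m-1))"
proof -
  define K where "K = (m-1)^Suc k"
  define B where "B = tpow n m (A0 n m) (Suc k)"
  have ord: "(m-1)^Suc(Suc k) = (m-1)*K" by (simp add: K_def)
  have tk: "take K (drop (l*K) (replicate ((m-1)*K) j)) = replicate K j" if "l < m-1" for l
  proof -
    have "(m-1)*K - l*K = (m-1-l)*K" by (simp add: diff_mult_distrib)
    moreover have "m-1-l \<ge> 1" using that by simp
    then have "(m-1-l)*K \<ge> K" by simp
    ultimately show ?thesis by (simp add: min_def)
  qed
  have pe: "(\<Prod>l<m-1. B (is!l # take K (drop (l*K) (replicate ((m-1)*K) j)))) = (\<Prod>l<m-1. B (is!l # replicate K j))" for "is"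
    by (intro prod.cong refl) (metis lessThan_iff tk)
  have "major ((m-1)^Suc (Suc k) + 1) (tpow n m (A0 n m) (Suc (Suc k))) u j
      = tprod n m (K+1) (A0 n m) B (u # replicate ((m-1)*K) j)"
    unfolding major_def B_def ord tpow.simps(3) K_def by simp
  also have "\<dots> = (\<Sum>is\<in>{xs. length xs = m - 1 \<and> set xs \<subseteq> {1..n}}. A0 n m (u # is) *
              (\<Prod>l<m - 1. B ((is ! l) # replicate K j)))"
    unfolding tprod_def list.case add_diff_cancel_right' pe ..
  also have "\<dots> = (\<Sum>l\<in>{1..n}. mu n u l * (\<Prod>i<m - 1. B ((replicate (m-1) l ! i) # replicate K j)))"
    by (rule sum_reduce[OF m2])
  also have "\<dots> = (\<Sum>l\<in>{1..n}. mu n u l * (major ((m-1)^Suc k + 1) B l j)^(m-1))"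
  proof (rule sum.cong[OF refl])
    fix l
    have "(\<Prod>i<m - 1. B ((replicate (m-1) l ! i) # replicate K j)) = (\<Prod>i<m - 1. B (l # replicate K j))"
      by (intro prod.cong refl) simp
    also have "\<dots> = B (l # replicate K j) ^ (m-1)" by simp
    also have "B (l # replicate K j) = major ((m-1)^Suc k + 1) B l j" by (simp add: major_def K_def)
    finally show "mu n u l * (\<Prod>i<m - 1. B ((replicate (m-1) l ! i) # replicate K j)) = mu n u l * (major ((m-1)^Suc k + 1) B l j)^(m-1)" by simp
  qed
  finally show ?thesis unfolding B_def .
qed


lemma sum_pos_iff:
  fixes f :: "nat \<Rightarrow> real"
  assumes fin: "finite S" and nn: "\<And>x. x \<in> S \<Longrightarrow> f x \<ge> 0"
  shows "(0 < sum f S) = (\<exists>x\<in>S. 0 < f x)"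
proof
  assume pos: "0 < sum f S"
  show "\<exists>x\<in>S. 0 < f x"
  proof (rule ccontr)
    assume neg: "\<not> (\<exists>x\<in>S. 0 < f x)"
    have "\<And>x. x \<in> S \<Longrightarrow> f x \<le> 0" using neg by (simp add: not_less)
    then have "sum f S \<le> 0" by (rule sum_nonpos)
    with pos show False by simp
  qed
next
  assume "\<exists>x\<in>S. 0 < f x"
  then obtain x where x: "x \<in> S" and fx: "0 < f x" by blast
  show "0 < sum f S" by (rule sum_pos2[where f=f and I=S and i=x, OF fin x fx]) (rule nn)
qed

lemma pow_pos_iff: "(0 < x^(m-1)) = (0 < x)" if "(x::real) \<ge> 0" "m \<ge> 2"
proof (cases "x = 0")
  case True
  then show ?thesis using that by (simp add: power_0_left)
next
  case False
  then show ?thesis using that by simp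
qed

definition PredS :: "nat \<Rightarrow> nat set \<Rightarrow> nat set" where
  "PredS n X = {u \<in> {1..n}. \<exists>l\<in>X. mu n u l = 1}"

fun G :: "nat \<Rightarrow> nat \<Rightarrow> nat \<Rightarrow> nat set" where
  "G n 0 j = {j}"
| "G n (Suc k) j = PredS n (G n k j)"

lemma G_sub: "G n (Suc k) j \<subseteq> {1..n}"
  by (auto simp: PredS_def)

lemma mu01: "mu n u l = 0 \<or> mu n u l = 1"
  by (simp add: mu_def)

lemma mu_nonneg: "mu n u l \<ge> 0"
  by (simp add: mu_def)

lemma Sset_G:
  assumes m2: "m \<ge> 2" and k: "k \<ge> 1"
  shows "Sset n m (A0 n m) k j = G n k j"
  using k
proof (induction k rule: nat_induct_at_least)
  case base
  have e1: "major ((m-1)^1+1) (tpow n m (A0 n m) 1) u j = mu n u j" for u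
    using major_one[OF m2] by (simp only: One_nat_def)
  have e2: "(0 < mu n u j) = (mu n u j = 1)" for u
    using mu01[of n u j] by auto
  have "G n 1 j = {u \<in> {1..n}. mu n u j = 1}" by (simp add: PredS_def)
  moreover have "Sset n m (A0 n m) 1 j = {u \<in> {1..n}. mu n u j = 1}"
    unfolding Sset_def e1 e2 ..
  ultimately show ?case by simp
next
  case (Suc k)
  then obtain k' where k': "k = Suc k'" by (cases k) auto
  have "Sset n m (A0 n m) (Suc k) j = {u \<in> {1..n}. 0 < (\<Sum>l\<in>{1..n}. mu n u l *
           (major ((m-1)^k + 1) (tpow n m (A0 n m) k) l j)^(m-1))}"
    unfolding Sset_def k' major_step[OF m2] ..
  also have "\<dots> = {u \<in> {1..n}. \<exists>l\<in>{1..n}. 0 < mu n u l *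
           (major ((m-1)^k + 1) (tpow n m (A0 n m) k) l j)^(m-1)}"
  proof -
    have "0 < (\<Sum>l\<in>{1..n}. mu n u l * (major ((m-1)^k + 1) (tpow n m (A0 n m) k) l j)^(m-1))
       \<longleftrightarrow> (\<exists>l\<in>{1..n}. 0 < mu n u l * (major ((m-1)^k + 1) (tpow n m (A0 n m) k) l j)^(m-1))" for u
      by (rule sum_pos_iff) (auto intro!: mult_nonneg_nonneg mu_nonneg zero_le_power simp: major_def tpow_nonneg)
    then show ?thesis by (simp)
  qed
  also have "\<dots> = {u \<in> {1..n}. \<exists>l\<in>{1..n}. mu n u l = 1 \<and> l \<in> Sset n m (A0 n m) k j}"
  proof -
    have "0 < mu n u l * (major ((m-1)^k + 1) (tpow n m (A0 n m) k) l j)^(m-1)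
          \<longleftrightarrow> mu n u l = 1 \<and> 0 < major ((m-1)^k + 1) (tpow n m (A0 n m) k) l j" for u l
    proof -
      have nn: "major ((m-1)^k + 1) (tpow n m (A0 n m) k) l j \<ge> 0" by (simp add: major_def tpow_nonneg)
      have "(0 < (major ((m-1)^k + 1) (tpow n m (A0 n m) k) l j)^(m-1)) \<longleftrightarrow> 0 < major ((m-1)^k + 1) (tpow n m (A0 n m) k) l j"
        using nn m2 pow_pos_iff by simp
      then show ?thesis using mu01[of n u l] by auto
    qed
    then show ?thesis by (auto simp: Sset_def)
  qed
  also have "\<dots> = PredS n (G n k j)"
  proof -
    have sub: "G n k j \<subseteq> {1..n}" using G_sub[of n k' j] k' by simp
    show ?thesis using Suc.IH sub unfolding PredS_def by blast
  qed
  also have "\<dots> = G n (Suc k) j" by simp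
  finally show ?case .
qed


lemma G_right: "G n (Suc k) j = (\<Union>l\<in>{l\<in>{1..n}. mu n l j = 1}. G n k l)"
proof (induction k arbitrary: j)
  case 0
  show ?case by (auto simp: PredS_def)
next
  case (Suc k)
  have "G n (Suc (Suc k)) j = PredS n (G n (Suc k) j)" by simp
  also have "\<dots> = PredS n (\<Union>l\<in>{l\<in>{1..n}. mu n l j = 1}. G n k l)" using Suc.IH by simp
  also have "\<dots> = (\<Union>l\<in>{l\<in>{1..n}. mu n l j = 1}. PredS n (G n k l))"
    unfolding PredS_def by blast
  finally show ?case by simp
qed

lemma preds_mid: "1 \<le> j \<Longrightarrow> j \<le> n - 2 \<Longrightarrow> {l\<in>{1..n}. mu n l j = 1} = {j+1}"
  by (auto simp: mu_def)

lemma preds_n: "n \<ge> 2 \<Longrightarrow> {l\<in>{1..n}. mu n l n = 1} = {1}"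
  by (auto simp: mu_def)

lemma G_mid: "1 \<le> j \<Longrightarrow> j \<le> n - 2 \<Longrightarrow> G n (Suc k) j = G n k (j+1)"
  by (simp only: G_right preds_mid) simp

lemma G_n: "n \<ge> 2 \<Longrightarrow> G n (Suc k) n = G n k 1"
  by (simp only: G_right preds_n) simp

lemma G_chain: "1 \<le> j \<Longrightarrow> j \<le> n - 1 \<Longrightarrow> G n (t + (n - 1 - j)) j = G n t (n - 1)"
proof (induction "n - 1 - j" arbitrary: j)
  case 0
  then have "j = n - 1" by simp
  then show ?case by simp
next
  case (Suc d)
  then have j: "j \<le> n - 2" and d: "d = n - 1 - (j+1)" by auto
  have "G n (t + (n - 1 - j)) j = G n (Suc (t + d)) j" by (simp only: Suc.hyps(2)[symmetric] add_Suc_right)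
  also have "\<dots> = G n (t + d) (j+1)" using G_mid[OF Suc.prems(1) j] by simp
  also have "\<dots> = G n t (n - 1)"
  proof -
    have ih: "G n (t + (n-1-(j+1))) (j+1) = G n t (n-1)"
      by (rule Suc.hyps(1)[OF d]) (use j Suc.prems in auto)
    show ?thesis using ih by (simp only: d)
  qed
  finally show ?case .
qed


lemma PredS_iff: "u \<in> PredS n X \<longleftrightarrow> u \<in> {1..n} \<and> ((u = 1 \<and> (n-1 \<in> X \<or> n \<in> X)) \<or> (2 \<le> u \<and> u - 1 \<in> X))"
  unfolding PredS_def mu_def by auto

definition Iset :: "nat \<Rightarrow> nat \<Rightarrow> nat \<Rightarrow> nat set" where
  "Iset n q r = {u \<in> {1..n}. (int r - int u) mod int n \<le> int q + 1}"

lemma mod_sub_n: "0 \<le> a \<Longrightarrow> a < int n \<Longrightarrow> (a - int n) mod int n = a"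
  by (simp add: mod_pos_pos_trivial)

lemma L0: "n \<ge> 2 \<Longrightarrow> G n 1 (n-1) = Iset n 0 1"
proof (rule set_eqI)
  fix u assume n: "n \<ge> 2"
  have "u \<in> G n 1 (n-1) \<longleftrightarrow> u \<in> {1..n} \<and> (u = 1 \<or> u = n)"
    using n unfolding One_nat_def G.simps PredS_iff by auto
  also have "\<dots> \<longleftrightarrow> u \<in> Iset n 0 1"
  proof (cases "u \<in> {1..n}")
    case True
    show ?thesis
    proof (cases "u = 1")
      case True then show ?thesis using n by (simp add: Iset_def)
    next
      case False
      then have u: "2 \<le> u" "u \<le> n" using \<open>u \<in> {1..n}\<close> by auto
      have "(1 - int u) mod int n = int n + 1 - int u"
        using mod_sub_n[of "int n + 1 - int u" n] u by simp
      then show ?thesis using u False by (auto simp: Iset_def)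
    qed
  next
    case False then show ?thesis by (auto simp: Iset_def)
  qed
  finally show "u \<in> G n 1 (n-1) \<longleftrightarrow> u \<in> Iset n 0 1" .
qed

lemma L1:
  assumes n: "n \<ge> 2" and r: "1 \<le> r" "r < n - 1"
  shows "PredS n (Iset n q r) = Iset n q (r+1)"
proof (rule set_eqI)
  fix u
  show "u \<in> PredS n (Iset n q r) \<longleftrightarrow> u \<in> Iset n q (r+1)"
  proof (cases "u = 1")
    case True
    have a: "(int r - int (n-1)) mod int n = int r + 1"
      using mod_sub_n[of "int r + 1" n] n r by (simp add: of_nat_diff algebra_simps)
    have b: "(int r - int n) mod int n = int r"
      using mod_sub_n[of "int r" n] n r by simp
    have c: "(int (r+1) - int u) mod int n = int r"
      using True n r by (simp add: mod_pos_pos_trivial)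
    show ?thesis using True n r a b c by (auto simp: PredS_iff Iset_def)
  next
    case False
    show ?thesis
    proof (cases "u \<in> {1..n}")
      case True
      then have u: "2 \<le> u" "u \<le> n" using False by auto
      have eq: "int r - (int u - 1) = 1 + int r - int u" by simp
      show ?thesis using u n by (auto simp: PredS_iff Iset_def of_nat_diff eq)
    next
      case False then show ?thesis by (auto simp: PredS_iff Iset_def)
    qed
  qed
qed

lemma L2:
  assumes n: "n \<ge> 2"
  shows "PredS n (Iset n q (n-1)) = Iset n (q+1) 1"
proof (rule set_eqI)
  fix u
  show "u \<in> PredS n (Iset n q (n-1)) \<longleftrightarrow> u \<in> Iset n (q+1) 1"
  proof (cases "u = 1")
    case True
    show ?thesis using True n by (auto simp: PredS_iff Iset_def)
  next
    case False
    show ?thesis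
    proof (cases "u \<in> {1..n}")
      case True
      then have u: "2 \<le> u" "u \<le> n" using False by auto
      have a: "(int (n-1) - int (u - 1)) mod int n = int n - int u"
        using u mod_sub_n[of "int n - int u" n] by (simp add: of_nat_diff mod_pos_pos_trivial)
      have b: "(int 1 - int u) mod int n = int n + 1 - int u"
        using mod_sub_n[of "int n + 1 - int u" n] u by simp
      show ?thesis using u n a b by (auto simp: PredS_iff Iset_def)
    next
      case False then show ?thesis by (auto simp: PredS_iff Iset_def)
    qed
  qed
qed


lemma step_r:
  assumes n: "n \<ge> 2" and base: "G n ((n-1)*q + 1) (n-1) = Iset n q 1"
  shows "1 \<le> r \<Longrightarrow> r \<le> n-1 \<Longrightarrow> G n ((n-1)*q + r) (n-1) = Iset n q r"
proof (induction r rule: nat_induct_at_least)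
  case base
  then show ?case using assms(2) by simp
next
  case (Suc r)
  have "G n ((n-1)*q + Suc r) (n-1) = PredS n (G n ((n-1)*q + r) (n-1))" by simp
  also have "\<dots> = PredS n (Iset n q r)" using Suc by simp
  also have "\<dots> = Iset n q (r+1)" using L1[OF n, of r q] Suc by simp
  finally show ?case by simp
qed

lemma Gq:
  assumes n: "n \<ge> 2"
  shows "1 \<le> r \<Longrightarrow> r \<le> n-1 \<Longrightarrow> G n ((n-1)*q + r) (n-1) = Iset n q r"
proof (induction q arbitrary: r)
  case 0
  show ?case by (rule step_r[OF n _ 0(1) 0(2)]) (use L0[OF n] in simp)
next
  case (Suc q)
  have b: "G n ((n-1)*Suc q + 1) (n-1) = Iset n (Suc q) 1"
  proof -
    have e: "(n-1)*Suc q + 1 = Suc ((n-1)*q + (n-1))" by simp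
    have "G n ((n-1)*Suc q + 1) (n-1) = PredS n (G n ((n-1)*q + (n-1)) (n-1))" by (simp only: e G.simps)
    also have "\<dots> = PredS n (Iset n q (n-1))" using Suc.IH[of "n-1"] n by simp
    also have "\<dots> = Iset n (Suc q) 1" using L2[OF n, of q] by simp
    finally show ?thesis .
  qed
  show ?case by (rule step_r[OF n b Suc(2) Suc(3)])
qed

lemma img:
  assumes n: "n \<ge> 2" and q: "q + 2 \<le> n" and r: "1 \<le> r" "r \<le> n - 1"
  shows "int ` Iset n q r = lpres n ` {int r - int q - 1 .. int r}"
proof
  show "int ` Iset n q r \<subseteq> lpres n ` {int r - int q - 1 .. int r}"
  proof
    fix x assume "x \<in> int ` Iset n q r"
    then obtain u where u: "u \<in> {1..n}" "(int r - int u) mod int n \<le> int q + 1" and x: "x = int u"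
      by (auto simp: Iset_def)
    define d where "d = (int r - int u) mod int n"
    define c where "c = (int r - int u) div int n"
    have d0: "0 \<le> d" using n by (simp add: d_def)
    have dm: "c * int n + d = int r - int u" unfolding c_def d_def by (rule div_mult_mod_eq)
    have e: "(int r - d - 1) = (int u - 1) + c * int n" using dm by simp
    have "(int r - d - 1) mod int n = (int u - 1) mod int n" unfolding e by (rule mod_mult_self1)
    also have "\<dots> = int u - 1" using u by (simp add: mod_pos_pos_trivial)
    finally have "lpres n (int r - d) = x" by (simp add: lpres_def x)
    moreover have "int r - d \<in> {int r - int q - 1 .. int r}" using d0 u(2) by (simp add: d_def)
    ultimately show "x \<in> lpres n ` {int r - int q - 1 .. int r}" by (metis image_eqI)
  qed
next
  show "lpres n ` {int r - int q - 1 .. int r} \<subseteq> int ` Iset n q r"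
  proof
    fix x assume "x \<in> lpres n ` {int r - int q - 1 .. int r}"
    then obtain i where i: "int r - int q - 1 \<le> i" "i \<le> int r" and x: "x = lpres n i" by auto
    define c where "c = (i - 1) div int n"
    have mb: "(i - 1) mod int n < int n" by (rule pos_mod_bound) (use n in simp)
    have ms: "0 \<le> (i - 1) mod int n" by (rule pos_mod_sign) (use n in simp)
    have x1: "1 \<le> x" "x \<le> int n"
      using mb ms by (simp_all add: x lpres_def)
    have dm2: "(i-1) div int n * int n + (i-1) mod int n = i - 1" by (rule div_mult_mod_eq)
    have xe: "x = i - c * int n" unfolding x lpres_def c_def using dm2 by linarith
    have e: "(int r - x) = (int r - i) + c * int n" using xe by simp
    have "(int r - x) mod int n = (int r - i) mod int n" unfolding e by (rule mod_mult_self1)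
    also have "\<dots> = int r - i" using i q by (simp add: mod_pos_pos_trivial)
    finally have m: "(int r - x) mod int n \<le> int q + 1" using i by simp
    have "nat x \<in> Iset n q r" using x1 m by (simp add: Iset_def; linarith)
    moreover have "x = int (nat x)" using x1 by simp
    ultimately show "x \<in> int ` Iset n q r" by (metis image_eqI)
  qed
qed

lemma lpres_inj:
  assumes q: "q + 2 \<le> n"
  shows "inj_on (lpres n) {int r - int q - 1 .. int r}"
proof (rule inj_onI)
  fix a b assume a: "a \<in> {int r - int q - 1 .. int r}" and b: "b \<in> {int r - int q - 1 .. int r}"
    and e: "lpres n a = lpres n b"
  then have "(a - 1) mod int n = (b - 1) mod int n" by (simp add: lpres_def)
  then have "int n dvd (a - 1) - (b - 1)" by (simp add: mod_eq_dvd_iff)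
  then have dv: "int n dvd a - b" by simp
  show "a = b"
  proof (rule ccontr)
    assume "a \<noteq> b"
    then have "\<bar>int n\<bar> \<le> \<bar>a - b\<bar>" using dvd_imp_le_int[OF _ dv] by simp
    moreover have "\<bar>a - b\<bar> \<le> int q + 1" using a b by auto
    ultimately show False using q by simp
  qed
qed

lemma card_I:
  assumes n: "n \<ge> 2" and q: "q + 2 \<le> n" and r: "1 \<le> r" "r \<le> n - 1"
  shows "card (Iset n q r) = q + 2"
proof -
  have "card (Iset n q r) = card (int ` Iset n q r)" by (simp add: card_image)
  also have "\<dots> = card (lpres n ` {int r - int q - 1 .. int r})" using img[OF assms] by simp
  also have "\<dots> = card {int r - int q - 1 .. int r}" by (rule card_image[OF lpres_inj[OF q]])
  also have "\<dots> = q + 2" by simp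
  finally show ?thesis .
qed


theorem proposition2p14:
  fixes n m :: nat
  assumes "n \<ge> 2" and "m \<ge> 2"
  shows "(\<forall>k q r. 1 \<le> k \<and> int k \<le> int n ^ 2 - 3 * int n + 2 \<and> k = (n - 1) * q + r \<and> 1 \<le> r \<and> r \<le> n - 1
            \<longrightarrow> int ` Sset n m (A0 n m) k (n - 1)
                  = lpres n ` {int r - int q - 1 .. int r}
              \<and> card (Sset n m (A0 n m) k (n - 1)) = q + 2)
       \<and> (\<forall>t \<ge> 1. (\<forall>j \<in> {1..n-2}. Sset n m (A0 n m) (t + (n - 1 - j)) j = Sset n m (A0 n m) t (n - 1))
                 \<and> Sset n m (A0 n m) (t + n - 1) n = Sset n m (A0 n m) t (n - 1))"
proof (intro conjI allI impI)
  fix k q r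
  assume h: "1 \<le> k \<and> int k \<le> int n ^ 2 - 3 * int n + 2 \<and> k = (n - 1) * q + r \<and> 1 \<le> r \<and> r \<le> n - 1"
  have n: "n \<ge> 2" by fact
  have e: "int n ^ 2 - 3 * int n + 2 = int ((n-1)*(n-2))"
  proof -
    have "int ((n-1)*(n-2)) = (int n - 1) * (int n - 2)" using n by (simp add: of_nat_diff)
    also have "\<dots> = int n ^ 2 - 3 * int n + 2" by (simp add: power2_eq_square algebra_simps)
    finally show ?thesis by simp
  qed
  have kb: "k \<le> (n-1)*(n-2)" using h e by linarith
  have "(n-1)*q < (n-1)*(n-2)" using h kb by linarith
  then have "q < n - 2" by simp
  then have q: "q + 2 \<le> n" by simp
  have S: "Sset n m (A0 n m) k (n - 1) = Iset n q r"
    using Sset_G[OF assms(2), of k n "n-1"] Gq[OF n, of r q] h by simp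
  show "int ` Sset n m (A0 n m) k (n - 1) = lpres n ` {int r - int q - 1 .. int r}"
    using S img[OF n q, of r] h by simp
  show "card (Sset n m (A0 n m) k (n - 1)) = q + 2"
    using S card_I[OF n q, of r] h by simp
next
  fix t :: nat assume t: "1 \<le> t"
  have n: "n \<ge> 2" by fact
  show "\<forall>j \<in> {1..n-2}. Sset n m (A0 n m) (t + (n - 1 - j)) j = Sset n m (A0 n m) t (n - 1)"
  proof
    fix j assume j: "j \<in> {1..n-2}"
    have "Sset n m (A0 n m) (t + (n - 1 - j)) j = G n (t + (n - 1 - j)) j"
      using Sset_G[OF assms(2)] t by simp
    also have "\<dots> = G n t (n - 1)" by (rule G_chain) (use j in auto)
    also have "\<dots> = Sset n m (A0 n m) t (n - 1)" using Sset_G[OF assms(2)] t by simp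
    finally show "Sset n m (A0 n m) (t + (n - 1 - j)) j = Sset n m (A0 n m) t (n - 1)" .
  qed
  have e: "t + n - 1 = Suc (t + (n - 1 - 1))" using n by simp
  have "Sset n m (A0 n m) (t + n - 1) n = G n (t + n - 1) n"
    by (rule Sset_G[OF assms(2)]) (use t n in simp)
  also have "\<dots> = G n (t + (n - 1 - 1)) 1" unfolding e by (rule G_n[OF n])
  also have "\<dots> = G n t (n - 1)" by (rule G_chain) (use n in auto)
  also have "\<dots> = Sset n m (A0 n m) t (n - 1)" using Sset_G[OF assms(2)] t by simp
  finally show "Sset n m (A0 n m) (t + n - 1) n = Sset n m (A0 n m) t (n - 1)" .
qed

end
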